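(* There is an algorithm which takes as input a filtered digital image $C$ and outputs a reduction $\rho=(f,g,h):C\Rightarrow EC$ onto a filtered chain complex $EC$ which is compatible with the filtrations ($f$ and $g$ are filtered chain complex morphisms and $h(C^i_n)\subseteq C^i_{n+1}$ for all $n,i$), where $\rho$ is obtained as a composition of several reductions, each of them being the canonical vector-field reduction associated to an admissible discrete vector field (on the current chain complex) which is maximal with respect to the filtration.
   Context: A digital image is a finite algebraic cellular complex $(C_n,d_n,\beta_n)_{n\in\mathbb{Z}}$: a free chain complex of $\mathbb{Z}$-modules with distinguished finite bases $\beta_n$, with $\beta_n=\emptyset$ outside an interval $[0,N]$. It is filtered if it carries a filtration $0=C^0\subseteq C^1\subseteq\cdots\subseteq C^m=C$ by sub-chain complexes, each $C^i_n$ spanned by $\beta_n\cap C^i_n$; a generator has filtration index $i$ if it lies in $C^i_n\setminus C^{i-1}_n$. A reduction $(f,g,h):D\Rightarrow E$ consists of chain morphisms $f:D\to E$, $g:E\to D$ and a degree $+1$ map $h:D\to D$ with $fg=\mathrm{id}_E$, $gf+dh+hd=\mathrm{id}_D$, $fh=0$, $hg=0$, $hh=0$. A discrete vector field (DVF) is a set $V=\{(\sigma_i;\tau_i)\}$ with $\sigma_i\in\beta_n$, $\tau_i\in\beta_{n+1}$, the coefficient of $\sigma_i$ in $d\tau_i$ equal to $\pm1$, each basis element appearing at most once; cells not in $V$ are critical. A $V$-path of degree $n$ is a sequence $\{(\sigma_{i_k};\tau_{i_k})\}_{0\le k<m}$ in $V$ with $\tau_{i_k}$ $n$-cells and, for $0<k<m$,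 $\sigma_{i_k}$ a face of $\tau_{i_{k-1}}$ different from $\sigma_{i_{k-1}}$; $V$ is admissible if the lengths of $V$-paths starting from any given cell are bounded (in the finite case: there are no loops). $V$ is maximal with respect to the filtration if each of its vectors consists of two cells of the same filtration index and no vector $(\sigma;\tau)$ can be added so that $V\cup\{(\sigma;\tau)\}$ is still admissible with both cells of each vector of the same filtration index. Canonical vector-field reduction: splitting $\beta_n$ into target cells (the $\tau_i$), source cells (the $\sigma_i$) and critical cells gives $C_n=C^t_n\oplus C^s_n\oplus C^c_n$ and a block decomposition $(d_{n,a,b})$ of $d_n$ (1=t, 2=s, 3=c); for admissible $V$, $d_{n,2,1}:C^t_n\to C^s_{n-1}$ is invertible, and the reduction $C\Rightarrow C^c$, $C^c_n=\mathbb{Z}[\beta^c_n]$, is given by $d'_n=d_{n,3,3}-d_{n,3,1}d_{n,2,1}^{-1}d_{n,2,3}$, $f_n=[0\;\;-d_{n,3,1}d_{n,2,1}^{-1}\;\;1]$, $g_n=[-d_{n,2,1}^{-1}d_{n,2,3};0;1]$, and $h$ equal to $d_{n+1,2,1}^{-1}$ on $C^s_n$ and zero on $C^t_n\oplus C^c_n$; the critical complex is filtered by $\mathbb{Z}[\beta^c_n\cap C^i_n]$. *)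

theory Defs
  imports Main
begin

text \<open>A free chain complex of Z-modules with distinguished bases is represented by
  its bases (cells n = set of basis elements in degree n) and its incidence
  coefficients: bd n tau sigma is the coefficient of sigma (in degree n-1) in
  the differential of tau (in degree n).  The filtration C^0 <= ... <= C^m is
  given by the sets filt i n = basis elements of C^i_n (each C^i_n is spanned by them).\<close>

record 'a fcx =
  cells :: "int \<Rightarrow> 'a set"
  bd    :: "int \<Rightarrow> 'a \<Rightarrow> 'a \<Rightarrow> int"
  filt  :: "nat \<Rightarrow> int \<Rightarrow> 'a set"
  flen  :: nat

definition delta :: "'a \<Rightarrow> 'a \<Rightarrow> int" where
  "delta a b = (if a = b then 1 else 0)"

definition is_filtered_complex :: "'a fcx \<Rightarrow> bool" where
  "is_filtered_complex C \<longleftrightarrow>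
     (\<forall>n. finite (cells C n)) \<and>
     (\<forall>n n'. n \<noteq> n' \<longrightarrow> cells C n \<inter> cells C n' = {}) \<and>
     (\<forall>n. \<forall>a\<in>cells C n. \<forall>c\<in>cells C (n - 2).
        (\<Sum>b\<in>cells C (n - 1). bd C n a b * bd C (n - 1) b c) = 0) \<and>
     (\<forall>n. filt C 0 n = {}) \<and>
     (\<forall>i n. filt C i n \<subseteq> filt C (Suc i) n) \<and>
     (\<forall>i n. filt C i n \<subseteq> cells C n) \<and>
     (\<forall>n. filt C (flen C) n = cells C n) \<and>
     (\<forall>i n. \<forall>t\<in>filt C i n. \<forall>s\<in>cells C (n - 1).
        bd C n t s \<noteq> 0 \<longrightarrow> s \<in> filt C i (n - 1))"

definition is_filtered_digital_image :: "'a fcx \<Rightarrow> bool" where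
  "is_filtered_digital_image C \<longleftrightarrow> is_filtered_complex C \<and>
     (\<exists>N::int. \<forall>n. (n < 0 \<or> n > N) \<longrightarrow> cells C n = {})"

text \<open>A map M of degree k from A to B is given by M n a b = coefficient of the
  basis element b of B_(n+k) in the image of the basis element a of A_n.\<close>

definition is_chain_map :: "'a fcx \<Rightarrow> 'a fcx \<Rightarrow> (int \<Rightarrow> 'a \<Rightarrow> 'a \<Rightarrow> int) \<Rightarrow> bool" where
  "is_chain_map A B f \<longleftrightarrow>
     (\<forall>n. \<forall>a\<in>cells A n. \<forall>c\<in>cells B (n - 1).
        (\<Sum>b\<in>cells B n. f n a b * bd B n b c) =
        (\<Sum>a'\<in>cells A (n - 1). bd A n a a' * f (n - 1) a' c))"

definition is_reduction :: "'a fcx \<Rightarrow> 'a fcx \<Rightarrow> (int \<Rightarrow> 'a \<Rightarrow> 'a \<Rightarrow> int)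
     \<Rightarrow> (int \<Rightarrow> 'a \<Rightarrow> 'a \<Rightarrow> int) \<Rightarrow> (int \<Rightarrow> 'a \<Rightarrow> 'a \<Rightarrow> int) \<Rightarrow> bool" where
  "is_reduction D E f g h \<longleftrightarrow>
     is_chain_map D E f \<and> is_chain_map E D g \<and>
     \<comment> \<open>f g = id_E\<close>
     (\<forall>n. \<forall>b\<in>cells E n. \<forall>b'\<in>cells E n.
        (\<Sum>a\<in>cells D n. g n b a * f n a b') = delta b b') \<and>
     \<comment> \<open>g f + d h + h d = id_D\<close>
     (\<forall>n. \<forall>a\<in>cells D n. \<forall>a'\<in>cells D n.
        (\<Sum>b\<in>cells E n. f n a b * g n b a')
        + (\<Sum>x\<in>cells D (n + 1). h n a x * bd D (n + 1) x a')
        + (\<Sum>y\<in>cells D (n - 1). bd D n a y * h (n - 1) y a') = delta a a') \<and>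
     \<comment> \<open>f h = 0\<close>
     (\<forall>n. \<forall>a\<in>cells D n. \<forall>b\<in>cells E (n + 1).
        (\<Sum>x\<in>cells D (n + 1). h n a x * f (n + 1) x b) = 0) \<and>
     \<comment> \<open>h g = 0\<close>
     (\<forall>n. \<forall>b\<in>cells E n. \<forall>a\<in>cells D (n + 1).
        (\<Sum>x\<in>cells D n. g n b x * h n x a) = 0) \<and>
     \<comment> \<open>h h = 0\<close>
     (\<forall>n. \<forall>a\<in>cells D n. \<forall>a'\<in>cells D (n + 2).
        (\<Sum>x\<in>cells D (n + 1). h n a x * h (n + 1) x a') = 0)"

definition is_filtered_map :: "'a fcx \<Rightarrow> 'a fcx \<Rightarrow> int \<Rightarrow> (int \<Rightarrow> 'a \<Rightarrow> 'a \<Rightarrow> int) \<Rightarrow> bool" where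
  "is_filtered_map A B k M \<longleftrightarrow>
     (\<forall>i n a b. a \<in> filt A i n \<longrightarrow> b \<in> cells B (n + k) \<longrightarrow> M n a b \<noteq> 0
        \<longrightarrow> b \<in> filt B i (n + k))"

type_synonym 'a red =
  "(int \<Rightarrow> 'a \<Rightarrow> 'a \<Rightarrow> int) \<times> (int \<Rightarrow> 'a \<Rightarrow> 'a \<Rightarrow> int) \<times> (int \<Rightarrow> 'a \<Rightarrow> 'a \<Rightarrow> int)"

definition id_red :: "'a red" where
  "id_red = ((\<lambda>n. delta), (\<lambda>n. delta), (\<lambda>n a b. 0))"

definition comp_red :: "'a fcx \<Rightarrow> 'a red \<Rightarrow> 'a red \<Rightarrow> 'a red" where
  "comp_red B r1 r2 = (case r1 of (f1, g1, h1) \<Rightarrow> case r2 of (f2, g2, h2) \<Rightarrow>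
     ((\<lambda>n a e. \<Sum>b\<in>cells B n. f1 n a b * f2 n b e),
      (\<lambda>n e a. \<Sum>b\<in>cells B n. g2 n e b * g1 n b a),
      (\<lambda>n a a'. h1 n a a' +
         (\<Sum>b\<in>cells B n. \<Sum>b'\<in>cells B (n + 1). f1 n a b * h2 n b b' * g1 (n + 1) b' a'))))"

definition is_dvf :: "'a fcx \<Rightarrow> ('a \<times> 'a) set \<Rightarrow> bool" where
  "is_dvf C V \<longleftrightarrow>
     (\<forall>(s, t)\<in>V. \<exists>n. s \<in> cells C n \<and> t \<in> cells C (n + 1) \<and> bd C (n + 1) t s \<in> {1, -1}) \<and>
     (\<forall>(s, t)\<in>V. \<forall>(s', t')\<in>V. (s = s' \<longleftrightarrow> t = t') \<and> s \<noteq> t')"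

definition is_vpath :: "'a fcx \<Rightarrow> ('a \<times> 'a) set \<Rightarrow> int \<Rightarrow> ('a \<times> 'a) list \<Rightarrow> bool" where
  "is_vpath C V n p \<longleftrightarrow> set p \<subseteq> V \<and>
     (\<forall>k < length p. snd (p ! k) \<in> cells C n) \<and>
     (\<forall>k. 0 < k \<and> k < length p \<longrightarrow>
        bd C n (snd (p ! (k - 1))) (fst (p ! k)) \<noteq> 0 \<and> fst (p ! k) \<noteq> fst (p ! (k - 1)))"

definition is_admissible :: "'a fcx \<Rightarrow> ('a \<times> 'a) set \<Rightarrow> bool" where
  "is_admissible C V \<longleftrightarrow>
     (\<forall>x. \<exists>B::nat. \<forall>n p. is_vpath C V n p \<and> p \<noteq> [] \<and> fst (hd p) = x \<longrightarrow> length p \<le> B)"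

definition fidx :: "'a fcx \<Rightarrow> 'a \<Rightarrow> nat" where
  "fidx C x = (LEAST i. \<exists>n. x \<in> filt C i n)"

definition is_filt_dvf :: "'a fcx \<Rightarrow> ('a \<times> 'a) set \<Rightarrow> bool" where
  "is_filt_dvf C V \<longleftrightarrow> is_dvf C V \<and> (\<forall>(s, t)\<in>V. fidx C s = fidx C t)"

definition is_maximal_filt_dvf :: "'a fcx \<Rightarrow> ('a \<times> 'a) set \<Rightarrow> bool" where
  "is_maximal_filt_dvf C V \<longleftrightarrow> is_filt_dvf C V \<and> is_admissible C V \<and>
     \<not> (\<exists>s t. (s, t) \<notin> V \<and> is_filt_dvf C (insert (s, t) V) \<and> is_admissible C (insert (s, t) V))"

definition tgt :: "'a fcx \<Rightarrow> ('a \<times> 'a) set \<Rightarrow> int \<Rightarrow> 'a set" where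
  "tgt C V n = {t \<in> cells C n. \<exists>s. (s, t) \<in> V}"

definition src :: "'a fcx \<Rightarrow> ('a \<times> 'a) set \<Rightarrow> int \<Rightarrow> 'a set" where
  "src C V n = {s \<in> cells C n. \<exists>t. (s, t) \<in> V}"

definition crit :: "'a fcx \<Rightarrow> ('a \<times> 'a) set \<Rightarrow> int \<Rightarrow> 'a set" where
  "crit C V n = cells C n - tgt C V n - src C V n"

text \<open>inv21 C V n s t: coefficient of the target cell t (degree n) in the image of
  the source cell s (degree n-1) under the inverse of d_(n,2,1): C^t_n -> C^s_(n-1).\<close>
definition inv21 :: "'a fcx \<Rightarrow> ('a \<times> 'a) set \<Rightarrow> int \<Rightarrow> 'a \<Rightarrow> 'a \<Rightarrow> int" where
  "inv21 C V n = (THE M.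
     (\<forall>s t. M s t \<noteq> 0 \<longrightarrow> s \<in> src C V (n - 1) \<and> t \<in> tgt C V n) \<and>
     (\<forall>t\<in>tgt C V n. \<forall>t'\<in>tgt C V n.
        (\<Sum>s\<in>src C V (n - 1). bd C n t s * M s t') = delta t t') \<and>
     (\<forall>s\<in>src C V (n - 1). \<forall>s'\<in>src C V (n - 1).
        (\<Sum>t\<in>tgt C V n. M s t * bd C n t s') = delta s s'))"

text \<open>The critical complex, with d' = d33 - d31 d21^-1 d23 and the induced filtration.\<close>
definition crit_complex :: "'a fcx \<Rightarrow> ('a \<times> 'a) set \<Rightarrow> 'a fcx" where
  "crit_complex C V = \<lparr> cells = crit C V,
     bd = (\<lambda>n c c'. bd C n c c' -
        (\<Sum>s\<in>src C V (n - 1). \<Sum>t\<in>tgt C V n. bd C n c s * inv21 C V n s t * bd C n t c')),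
     filt = (\<lambda>i n. filt C i n \<inter> crit C V n),
     flen = flen C \<rparr>"

text \<open>The canonical reduction C => C^c: f = [0, -d31 d21^-1, 1], g = [-d21^-1 d23; 0; 1],
  h = d21^-1 on source cells and 0 elsewhere.\<close>
definition vf_red :: "'a fcx \<Rightarrow> ('a \<times> 'a) set \<Rightarrow> 'a red" where
  "vf_red C V =
     ((\<lambda>n a c. if a \<in> tgt C V n then 0
               else if a \<in> src C V n then
                 - (\<Sum>t\<in>tgt C V (n + 1). inv21 C V (n + 1) a t * bd C (n + 1) t c)
               else delta a c),
      (\<lambda>n c b. if b \<in> tgt C V n then
                 - (\<Sum>s\<in>src C V (n - 1). bd C n c s * inv21 C V n s b)
               else if b \<in> src C V n then 0
               else delta c b),
      (\<lambda>n a b. if a \<in> src C V n then inv21 C V (n + 1) a b else 0))"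

fun valid_seq :: "'a fcx \<Rightarrow> ('a \<times> 'a) set list \<Rightarrow> bool" where
  "valid_seq C [] = True"
| "valid_seq C (V # Vs) \<longleftrightarrow> is_admissible C V \<and> is_maximal_filt_dvf C V \<and>
     valid_seq (crit_complex C V) Vs"

fun iter_red :: "'a fcx \<Rightarrow> ('a \<times> 'a) set list \<Rightarrow> 'a fcx \<times> 'a red" where
  "iter_red C [] = (C, id_red)"
| "iter_red C (V # Vs) =
     (let D = crit_complex C V; (E, r) = iter_red D Vs in (E, comp_red D (vf_red C V) r))"

end

theory Submission
  imports Defs "HOL-Library.Function_Algebras"
begin

lemma delta_sym: "delta a b = delta b a" by (simp add: delta_def)
lemma sum_delta_l: "finite A \<Longrightarrow> (\<Sum>y\<in>A. delta x y * f y) = (if x\<in>A then f x else 0)"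
  unfolding delta_def by (simp add: if_distrib[where f="\<lambda>c. c * _"] sum.delta cong: if_cong)
lemma sum_delta_r: "finite A \<Longrightarrow> (\<Sum>y\<in>A. f y * delta y x) = (if x\<in>A then f x else 0)"
  unfolding delta_def by (simp add: if_distrib[where f="\<lambda>c. _ * c"] sum.delta' cong: if_cong)

locale dctx =
  fixes C :: "'a fcx" and V :: "('a \<times> 'a) set"
  assumes fc: "is_filtered_complex C"
    and bnd: "\<exists>N::int. \<forall>n. (n < 0 \<or> n > N) \<longrightarrow> cells C n = {}"
    and dvf: "is_dvf C V"
    and adm: "is_admissible C V"
begin

lemma fin_cells: "finite (cells C n)" using fc by (simp add: is_filtered_complex_def)

lemma disj: "x \<in> cells C n \<Longrightarrow> x \<in> cells C m \<Longrightarrow> n = m"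
  using fc unfolding is_filtered_complex_def by blast

lemma dd0: "a \<in> cells C n \<Longrightarrow> c \<in> cells C (n - 2) \<Longrightarrow>
   (\<Sum>b\<in>cells C (n - 1). bd C n a b * bd C (n - 1) b c) = 0"
  using fc unfolding is_filtered_complex_def by blast

lemma filt_sub: "filt C i n \<subseteq> cells C n"
  using fc unfolding is_filtered_complex_def by blast

lemma filt_bd: "t \<in> filt C i n \<Longrightarrow> s \<in> cells C (n - 1) \<Longrightarrow> bd C n t s \<noteq> 0 \<Longrightarrow> s \<in> filt C i (n - 1)"
  using fc unfolding is_filtered_complex_def by blast

lemma filt_mono: "i \<le> j \<Longrightarrow> filt C i n \<subseteq> filt C j n"
proof (induction j)
  case 0 thus ?case by simp
next
  case (Suc j)
  have "filt C j n \<subseteq> filt C (Suc j) n" using fc unfolding is_filtered_complex_def by blast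
  with Suc show ?case by (cases "i = Suc j") auto
qed

lemma filt_top: "filt C (flen C) n = cells C n"
  using fc unfolding is_filtered_complex_def by blast

lemma filt_0: "filt C 0 n = {}"
  using fc unfolding is_filtered_complex_def by blast

lemma filt_fidx: assumes "x \<in> cells C m" shows "x \<in> filt C i m \<longleftrightarrow> fidx C x \<le> i"
proof -
  have eq: "(\<exists>n. x \<in> filt C i n) \<longleftrightarrow> x \<in> filt C i m" for i
    using assms filt_sub disj by blast
  have ex: "x \<in> filt C (flen C) m" using assms filt_top by simp
  have f: "fidx C x = (LEAST i. x \<in> filt C i m)" unfolding fidx_def eq ..
  show ?thesis
  proof
    assume "x \<in> filt C i m" thus "fidx C x \<le> i" unfolding f by (rule Least_le)
  next
    assume "fidx C x \<le> i"
    moreover have "x \<in> filt C (fidx C x) m" unfolding f using ex by (rule LeastI)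
    ultimately show "x \<in> filt C i m" using filt_mono by blast
  qed
qed

definition X where "X = (\<Union>n. cells C n)"

lemma finX: "finite X"
proof -
  obtain N :: int where N: "\<forall>n. (n < 0 \<or> n > N) \<longrightarrow> cells C n = {}" using bnd by blast
  have "X = (\<Union>n\<in>{0..N}. cells C n)" unfolding X_def using N
  proof (auto simp: not_less)
    fix x n assume "x \<in> cells C n"
    hence "0 \<le> n \<and> n \<le> N" using N by (metis empty_iff not_le)
    thus "\<exists>m\<in>{0..N}. x \<in> cells C m" using \<open>x \<in> cells C n\<close> by auto
  qed
  thus ?thesis using fin_cells by simp
qed

lemma cells_X: "x \<in> cells C n \<Longrightarrow> x \<in> X" unfolding X_def by blast

definition deg where "deg x = (THE n. x \<in> cells C n)"

lemma deg_eq: "x \<in> cells C n \<Longrightarrow> deg x = n"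
  unfolding deg_def using disj by blast

lemma deg_X: "x \<in> X \<Longrightarrow> x \<in> cells C (deg x)"
  unfolding X_def using deg_eq by auto

lemma V_cells: "(s, t) \<in> V \<Longrightarrow> \<exists>n. s \<in> cells C n \<and> t \<in> cells C (n + 1) \<and> bd C (n + 1) t s \<in> {1, -1}"
  using dvf unfolding is_dvf_def by blast

lemma V_inj1: "(s, t) \<in> V \<Longrightarrow> (s, t') \<in> V \<Longrightarrow> t = t'"
  using dvf unfolding is_dvf_def by blast
lemma V_inj2: "(s, t) \<in> V \<Longrightarrow> (s', t) \<in> V \<Longrightarrow> s = s'"
  using dvf unfolding is_dvf_def by blast
lemma V_ne: "(s, t) \<in> V \<Longrightarrow> (s', t') \<in> V \<Longrightarrow> s \<noteq> t'"
  using dvf unfolding is_dvf_def by blast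

definition tau where "tau s = (THE t. (s, t) \<in> V)"
definition sig where "sig t = (THE s. (s, t) \<in> V)"

lemma tau: "(s, t) \<in> V \<Longrightarrow> tau s = t" unfolding tau_def using V_inj1 by blast
lemma sig: "(s, t) \<in> V \<Longrightarrow> sig t = s" unfolding sig_def using V_inj2 by blast

lemma src_V: "s \<in> src C V (n - 1) \<Longrightarrow> (s, tau s) \<in> V \<and> tau s \<in> tgt C V n \<and> bd C n (tau s) s \<in> {1, -1}"
proof -
  assume s: "s \<in> src C V (n - 1)"
  then obtain t where st: "(s, t) \<in> V" and sc: "s \<in> cells C (n - 1)" unfolding src_def by blast
  then obtain m where m: "s \<in> cells C m" "t \<in> cells C (m + 1)" "bd C (m + 1) t s \<in> {1, -1}"
    using V_cells by blast
  have "m = n - 1" using disj sc m(1) by blast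
  hence "m + 1 = n" by simp
  thus ?thesis using st m tau[OF st] unfolding tgt_def by auto
qed

lemma tgt_V: "t \<in> tgt C V n \<Longrightarrow> (sig t, t) \<in> V \<and> sig t \<in> src C V (n - 1) \<and> tau (sig t) = t"
proof -
  assume t: "t \<in> tgt C V n"
  then obtain s where st: "(s, t) \<in> V" and tc: "t \<in> cells C n" unfolding tgt_def by blast
  then obtain m where m: "s \<in> cells C m" "t \<in> cells C (m + 1)"
    using V_cells by blast
  have "m + 1 = n" using disj tc m(2) by blast
  hence "m = n - 1" by simp
  thus ?thesis using st m sig[OF st] tau[OF st] unfolding src_def by auto
qed

lemma src_fin: "finite (src C V n)" unfolding src_def using fin_cells by simp
lemma tgt_fin: "finite (tgt C V n)" unfolding tgt_def using fin_cells by simp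

lemma src_tgt_disj: "x \<in> src C V n \<Longrightarrow> x \<in> tgt C V m \<Longrightarrow> False"
  unfolding src_def tgt_def using V_ne by blast

lemma eps_sq: "e \<in> {1, -1::int} \<Longrightarrow> e * e = 1" by auto

end


context dctx begin

definition R :: "int \<Rightarrow> ('a \<times> 'a) set" where
  "R n = {(s', s). s \<in> src C V (n - 1) \<and> s' \<in> src C V (n - 1) \<and> s' \<noteq> s \<and> bd C n (tau s) s' \<noteq> 0}"

lemma wfR: "wf (R n)"
  unfolding wf_iff_no_infinite_down_chain
proof
  assume "\<exists>f. \<forall>i. (f (Suc i), f i) \<in> R n"
  then obtain f where f: "\<And>i. (f (Suc i), f i) \<in> R n" by blast
  have fs: "f i \<in> src C V (n - 1)" for i using f[of i] unfolding R_def by auto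
  obtain B where B: "\<And>m p. is_vpath C V m p \<and> p \<noteq> [] \<and> fst (hd p) = f 0 \<longrightarrow> length p \<le> B"
    using adm unfolding is_admissible_def by blast
  define p where "p = map (\<lambda>i. (f i, tau (f i))) [0..<Suc B]"
  have "is_vpath C V n p" unfolding is_vpath_def
  proof (intro conjI)
    show "set p \<subseteq> V" unfolding p_def using fs src_V by auto
    show "\<forall>k<length p. snd (p ! k) \<in> cells C n" unfolding p_def using fs src_V unfolding tgt_def
      by (auto simp del: upt_Suc)
    show "\<forall>k. 0 < k \<and> k < length p \<longrightarrow> bd C n (snd (p ! (k - 1))) (fst (p ! k)) \<noteq> 0 \<and> fst (p ! k) \<noteq> fst (p ! (k - 1))"
    proof (intro allI impI)
      fix k assume k: "0 < k \<and> k < length p"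
      then obtain j where j: "k = Suc j" by (cases k) auto
      have "(f k, f j) \<in> R n" using f j by simp
      moreover have "p ! k = (f k, tau (f k))" "p ! (k - 1) = (f j, tau (f j))"
        using k j unfolding p_def by (auto simp del: upt_Suc)
      ultimately show "bd C n (snd (p ! (k - 1))) (fst (p ! k)) \<noteq> 0 \<and> fst (p ! k) \<noteq> fst (p ! (k - 1))"
        unfolding R_def by auto
    qed
  qed
  moreover have "p \<noteq> []" "fst (hd p) = f 0" unfolding p_def by (auto simp del: upt_Suc simp: hd_map)
  ultimately have "length p \<le> B" using B by blast
  thus False unfolding p_def by simp
qed

lemma inj_lemma:
  assumes h: "\<And>t. t \<in> tgt C V n \<Longrightarrow> (\<Sum>s\<in>src C V (n - 1). bd C n t s * x s) = 0"
  shows "s \<in> src C V (n - 1) \<Longrightarrow> x s = 0"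
proof (induction s rule: wf_induct[OF wfR[of n]])
  case (1 s)
  let ?S = "src C V (n - 1)"
  have sv: "(s, tau s) \<in> V" "tau s \<in> tgt C V n" "bd C n (tau s) s \<in> {1, -1}" using src_V[OF 1(2)] by auto
  have "0 = (\<Sum>s'\<in>?S. bd C n (tau s) s' * x s')" using h[OF sv(2)] by simp
  also have "\<dots> = bd C n (tau s) s * x s + (\<Sum>s'\<in>?S - {s}. bd C n (tau s) s' * x s')"
    using 1(2) src_fin by (simp add: sum.remove)
  also have "(\<Sum>s'\<in>?S - {s}. bd C n (tau s) s' * x s') = 0"
  proof (rule sum.neutral, rule ballI)
    fix s' assume s': "s' \<in> ?S - {s}"
    show "bd C n (tau s) s' * x s' = 0"
    proof (cases "bd C n (tau s) s' = 0")
      case False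
      hence "(s', s) \<in> R n" using s' 1(2) unfolding R_def by auto
      thus ?thesis using 1(1) s' by auto
    qed simp
  qed
  finally have "bd C n (tau s) s * x s = 0" by simp
  thus ?case using sv(3) by auto
qed

definition Fr :: "int \<Rightarrow> ('a \<Rightarrow> 'a \<Rightarrow> int) \<Rightarrow> 'a \<Rightarrow> 'a \<Rightarrow> int" where
  "Fr n g s = (\<lambda>t'. bd C n (tau s) s * (delta (tau s) t' -
      (\<Sum>s'\<in>src C V (n - 1) - {s}. bd C n (tau s) s' * g s' t')))"

definition J0 where "J0 n = wfrec (R n) (Fr n)"

lemma J0_eq: assumes s: "s \<in> src C V (n - 1)"
  shows "J0 n s t' = bd C n (tau s) s * (delta (tau s) t' -
      (\<Sum>s'\<in>src C V (n - 1) - {s}. bd C n (tau s) s' * J0 n s' t'))"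
proof -
  have "J0 n s = Fr n (cut (J0 n) (R n) s) s" unfolding J0_def by (rule wfrec[OF wfR])
  hence "J0 n s t' = Fr n (cut (J0 n) (R n) s) s t'" by simp
  also have "\<dots> = bd C n (tau s) s * (delta (tau s) t' -
      (\<Sum>s'\<in>src C V (n - 1) - {s}. bd C n (tau s) s' * J0 n s' t'))"
  proof -
    have "(\<Sum>s'\<in>src C V (n - 1) - {s}. bd C n (tau s) s' * cut (J0 n) (R n) s s' t') =
          (\<Sum>s'\<in>src C V (n - 1) - {s}. bd C n (tau s) s' * J0 n s' t')"
    proof (rule sum.cong[OF refl])
      fix s' assume s': "s' \<in> src C V (n - 1) - {s}"
      show "bd C n (tau s) s' * cut (J0 n) (R n) s s' t' = bd C n (tau s) s' * J0 n s' t'"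
      proof (cases "bd C n (tau s) s' = 0")
        case False
        hence "(s', s) \<in> R n" using s' s unfolding R_def by auto
        thus ?thesis by (simp add: cut_apply)
      qed simp
    qed
    thus ?thesis unfolding Fr_def by simp
  qed
  finally show ?thesis .
qed

definition Jn where "Jn n s t = (if s \<in> src C V (n - 1) \<and> t \<in> tgt C V n then J0 n s t else 0)"

lemma Jn_right: assumes t: "t \<in> tgt C V n" and t': "t' \<in> tgt C V n"
  shows "(\<Sum>s\<in>src C V (n - 1). bd C n t s * Jn n s t') = delta t t'"
proof -
  let ?S = "src C V (n - 1)"
  have tv: "(sig t, t) \<in> V" "sig t \<in> ?S" "tau (sig t) = t" using tgt_V[OF t] by auto
  have e: "bd C n t (sig t) \<in> {1, -1}" using src_V[OF tv(2)] tv(3) by simp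
  have "(\<Sum>s\<in>?S. bd C n t s * Jn n s t') = (\<Sum>s\<in>?S. bd C n t s * J0 n s t')"
    unfolding Jn_def using t' by simp
  also have "\<dots> = bd C n t (sig t) * J0 n (sig t) t' + (\<Sum>s\<in>?S - {sig t}. bd C n t s * J0 n s t')"
    using tv(2) src_fin by (simp add: sum.remove)
  also have "\<dots> = delta t t'"
    unfolding J0_eq[OF tv(2)] tv(3)
    using eps_sq[OF e] by (simp add: algebra_simps)
  finally show ?thesis .
qed

lemma Jn_left: assumes s: "s \<in> src C V (n - 1)" and s': "s' \<in> src C V (n - 1)"
  shows "(\<Sum>t\<in>tgt C V n. Jn n s t * bd C n t s') = delta s s'"
proof -
  let ?S = "src C V (n - 1)" and ?T = "tgt C V n"
  define x where "x s = (\<Sum>t\<in>?T. Jn n s t * bd C n t s') - delta s s'" for s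
  have "x s = 0"
  proof (rule inj_lemma[OF _ s])
    fix t assume t: "t \<in> ?T"
    have "(\<Sum>s\<in>?S. bd C n t s * x s) = (\<Sum>s\<in>?S. \<Sum>t'\<in>?T. bd C n t s * Jn n s t' * bd C n t' s') - (\<Sum>s\<in>?S. bd C n t s * delta s s')"
      unfolding x_def by (simp add: algebra_simps sum_distrib_left sum_subtractf)
    also have "(\<Sum>s\<in>?S. \<Sum>t'\<in>?T. bd C n t s * Jn n s t' * bd C n t' s') = (\<Sum>t'\<in>?T. (\<Sum>s\<in>?S. bd C n t s * Jn n s t') * bd C n t' s')"
      by (subst sum.swap) (simp add: sum_distrib_right)
    also have "\<dots> = (\<Sum>t'\<in>?T. delta t t' * bd C n t' s')"
      using Jn_right t by simp
    also have "\<dots> = bd C n t s'" using t tgt_fin by (simp add: sum_delta_l)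
    also have "(\<Sum>s\<in>?S. bd C n t s * delta s s') = bd C n t s'" using s' src_fin
      by (simp add: sum_delta_r)
    finally show "(\<Sum>s\<in>?S. bd C n t s * x s) = 0" by simp
  qed
  thus ?thesis unfolding x_def by simp
qed

lemma inv21_eq: "inv21 C V n = Jn n"
  unfolding inv21_def
proof (rule the_equality)
  show "(\<forall>s t. Jn n s t \<noteq> 0 \<longrightarrow> s \<in> src C V (n - 1) \<and> t \<in> tgt C V n) \<and>
    (\<forall>t\<in>tgt C V n. \<forall>t'\<in>tgt C V n. (\<Sum>s\<in>src C V (n - 1). bd C n t s * Jn n s t') = delta t t') \<and>
    (\<forall>s\<in>src C V (n - 1). \<forall>s'\<in>src C V (n - 1). (\<Sum>t\<in>tgt C V n. Jn n s t * bd C n t s') = delta s s')"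
    using Jn_right Jn_left by (auto simp: Jn_def split: if_splits)
next
  fix M
  assume M: "(\<forall>s t. M s t \<noteq> 0 \<longrightarrow> s \<in> src C V (n - 1) \<and> t \<in> tgt C V n) \<and>
    (\<forall>t\<in>tgt C V n. \<forall>t'\<in>tgt C V n. (\<Sum>s\<in>src C V (n - 1). bd C n t s * M s t') = delta t t') \<and>
    (\<forall>s\<in>src C V (n - 1). \<forall>s'\<in>src C V (n - 1). (\<Sum>t\<in>tgt C V n. M s t * bd C n t s') = delta s s')"
  show "M = Jn n"
  proof (intro ext)
    fix s t'
    show "M s t' = Jn n s t'"
    proof (cases "s \<in> src C V (n - 1) \<and> t' \<in> tgt C V n")
      case True
      have "(\<lambda>s. M s t' - Jn n s t') s = 0"
      proof (rule inj_lemma[where x="\<lambda>s. M s t' - Jn n s t'"])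
        fix t assume t: "t \<in> tgt C V n"
        have "(\<Sum>s\<in>src C V (n - 1). bd C n t s * (M s t' - Jn n s t')) =
           (\<Sum>s\<in>src C V (n - 1). bd C n t s * M s t') - (\<Sum>s\<in>src C V (n - 1). bd C n t s * Jn n s t')"
          by (simp add: algebra_simps sum_subtractf)
        thus "(\<Sum>s\<in>src C V (n - 1). bd C n t s * (M s t' - Jn n s t')) = 0"
          using M Jn_right t True by simp
      qed (use True in simp)
      thus ?thesis by simp
    next
      case False thus ?thesis using M unfolding Jn_def by auto
    qed
  qed
qed

lemma inv21_supp: "inv21 C V n s t \<noteq> 0 \<Longrightarrow> s \<in> src C V (n - 1) \<and> t \<in> tgt C V n"
  unfolding inv21_eq Jn_def by (auto split: if_splits)

lemma inv21_right: "t \<in> tgt C V n \<Longrightarrow> t' \<in> tgt C V n \<Longrightarrow>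
   (\<Sum>s\<in>src C V (n - 1). bd C n t s * inv21 C V n s t') = delta t t'"
  unfolding inv21_eq by (rule Jn_right)

lemma inv21_left: "s \<in> src C V (n - 1) \<Longrightarrow> s' \<in> src C V (n - 1) \<Longrightarrow>
   (\<Sum>t\<in>tgt C V n. inv21 C V n s t * bd C n t s') = delta s s'"
  unfolding inv21_eq by (rule Jn_left)

end

context dctx begin

definition Tall where "Tall = {x. \<exists>s. (s, x) \<in> V}"
definition Sall where "Sall = {x. \<exists>t. (x, t) \<in> V}"
definition Kall where "Kall = X - Tall - Sall"

lemma Tall_tgt: "x \<in> cells C n \<Longrightarrow> x \<in> Tall \<longleftrightarrow> x \<in> tgt C V n"
  unfolding Tall_def tgt_def by auto
lemma Sall_src: "x \<in> cells C n \<Longrightarrow> x \<in> Sall \<longleftrightarrow> x \<in> src C V n"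
  unfolding Sall_def src_def by auto
lemma Kall_crit: "x \<in> crit C V n \<longleftrightarrow> x \<in> cells C n \<and> x \<in> Kall"
  unfolding Kall_def crit_def using Tall_tgt Sall_src cells_X by blast
lemma TS_disj: "x \<in> Tall \<Longrightarrow> x \<in> Sall \<Longrightarrow> False"
  unfolding Tall_def Sall_def using V_ne by blast

definition mm :: "('a \<Rightarrow> 'a \<Rightarrow> int) \<Rightarrow> ('a \<Rightarrow> 'a \<Rightarrow> int) \<Rightarrow> 'a \<Rightarrow> 'a \<Rightarrow> int" where
  "mm A B = (\<lambda>x z. \<Sum>y\<in>X. A x y * B y z)"

definition dg :: "'a set \<Rightarrow> 'a \<Rightarrow> 'a \<Rightarrow> int" where
  "dg P = (\<lambda>x y. if x = y \<and> x \<in> X \<and> x \<in> P then 1 else 0)"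

lemma mm_assoc: "mm (mm A B) E = mm A (mm B E)"
  unfolding mm_def
proof (intro ext)
  fix x z
  have "(\<Sum>y\<in>X. (\<Sum>w\<in>X. A x w * B w y) * E y z) = (\<Sum>y\<in>X. \<Sum>w\<in>X. A x w * B w y * E y z)"
    by (simp add: sum_distrib_right)
  also have "\<dots> = (\<Sum>w\<in>X. \<Sum>y\<in>X. A x w * B w y * E y z)" by (rule sum.swap)
  also have "\<dots> = (\<Sum>w\<in>X. A x w * (\<Sum>y\<in>X. B w y * E y z))"
    by (simp add: sum_distrib_left mult.assoc)
  finally show "(\<Sum>y\<in>X. (\<Sum>w\<in>X. A x w * B w y) * E y z) = (\<Sum>w\<in>X. A x w * (\<Sum>y\<in>X. B w y * E y z))" .
qed

lemma mm_add_l: "mm (A + B) E = mm A E + mm B E"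
  unfolding mm_def by (simp add: fun_eq_iff algebra_simps sum.distrib)
lemma mm_add_r: "mm E (A + B) = mm E A + mm E B"
  unfolding mm_def by (simp add: fun_eq_iff algebra_simps sum.distrib)
lemma mm_diff_l: "mm (A - B) E = mm A E - mm B E"
  unfolding mm_def by (simp add: fun_eq_iff algebra_simps sum_subtractf)
lemma mm_diff_r: "mm E (A - B) = mm E A - mm E B"
  unfolding mm_def by (simp add: fun_eq_iff algebra_simps sum_subtractf)
lemma mm_0_l: "mm 0 E = 0" unfolding mm_def by (simp add: fun_eq_iff)
lemma mm_0_r: "mm E 0 = 0" unfolding mm_def by (simp add: fun_eq_iff)

lemma mm_dg_l: "mm (dg P) B = (\<lambda>x z. if x \<in> X \<and> x \<in> P then B x z else 0)"
proof (intro ext)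
  fix x z
  show "mm (dg P) B x z = (if x \<in> X \<and> x \<in> P then B x z else 0)"
  proof (cases "x \<in> X \<and> x \<in> P")
    case True
    hence "mm (dg P) B x z = (\<Sum>y\<in>X. if x = y then B y z else 0)"
      unfolding mm_def dg_def by (intro sum.cong) auto
    thus ?thesis using True finX by simp
  next
    case False thus ?thesis unfolding mm_def dg_def by (auto intro: sum.neutral)
  qed
qed
lemma mm_dg_r: "mm A (dg P) = (\<lambda>x z. if z \<in> X \<and> z \<in> P then A x z else 0)"
proof (intro ext)
  fix x z
  show "mm A (dg P) x z = (if z \<in> X \<and> z \<in> P then A x z else 0)"
  proof (cases "z \<in> X \<and> z \<in> P")
    case True
    hence "mm A (dg P) x z = (\<Sum>y\<in>X. if y = z then A x y else 0)"
      unfolding mm_def dg_def by (intro sum.cong) auto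
    thus ?thesis using True finX by simp
  next
    case False thus ?thesis unfolding mm_def dg_def by (auto intro: sum.neutral)
  qed
qed

definition rs :: "('a \<Rightarrow> 'a \<Rightarrow> int) \<Rightarrow> bool" where "rs A \<longleftrightarrow> (\<forall>x z. x \<notin> X \<longrightarrow> A x z = 0)"
definition cs :: "('a \<Rightarrow> 'a \<Rightarrow> int) \<Rightarrow> bool" where "cs A \<longleftrightarrow> (\<forall>x z. z \<notin> X \<longrightarrow> A x z = 0)"

lemma mm_I_l: "rs B \<Longrightarrow> mm (dg X) B = B"
  unfolding mm_dg_l rs_def by (auto simp: fun_eq_iff)
lemma mm_I_r: "cs A \<Longrightarrow> mm A (dg X) = A"
  unfolding mm_dg_r cs_def by (auto simp: fun_eq_iff)
lemma rs_mm: "rs A \<Longrightarrow> rs (mm A B)" unfolding rs_def mm_def by simp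
lemma cs_mm: "cs B \<Longrightarrow> cs (mm A B)" unfolding cs_def mm_def by simp
lemma rs_dg: "rs (dg P)" unfolding rs_def dg_def by simp
lemma cs_dg: "cs (dg P)" unfolding cs_def dg_def by auto
lemma rs_diff: "rs A \<Longrightarrow> rs B \<Longrightarrow> rs (A - B)" unfolding rs_def by (simp del: fun_diff_def)
lemma cs_diff: "cs A \<Longrightarrow> cs B \<Longrightarrow> cs (A - B)" unfolding cs_def by (simp del: fun_diff_def)
lemma dg_dg: "mm (dg P) (dg P) = dg P" by (simp add: mm_dg_l) (auto simp: dg_def fun_eq_iff)

definition Dm where "Dm x y = (if x \<in> X \<and> y \<in> cells C (deg x - 1) then bd C (deg x) x y else 0)"
definition Jm where "Jm x y = (if x \<in> X then inv21 C V (deg x + 1) x y else 0)"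

lemma Jm_nz: "Jm x y \<noteq> 0 \<Longrightarrow> x \<in> X \<and> x \<in> src C V (deg x) \<and> y \<in> tgt C V (deg x + 1)"
  unfolding Jm_def using inv21_supp[of "deg x + 1" x y] by (auto split: if_splits)

lemma Jm_nz2: "Jm x y \<noteq> 0 \<Longrightarrow> x \<in> Sall \<and> y \<in> Tall \<and> y \<in> X"
  using Jm_nz Sall_src Tall_tgt unfolding tgt_def src_def using cells_X by blast

lemma rs_D: "rs Dm" unfolding rs_def Dm_def by simp
lemma cs_D: "cs Dm" unfolding cs_def Dm_def using cells_X by auto
lemma rs_J: "rs Jm" unfolding rs_def Jm_def by simp
lemma cs_J: "cs Jm" unfolding cs_def using Jm_nz2 by blast

lemma DD: "mm Dm Dm = 0"
proof (rule ext, rule ext)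
  fix x z
  show "mm Dm Dm x z = 0 x z"
  proof (cases "x \<in> X")
    case False thus ?thesis unfolding mm_def Dm_def by simp
  next
    case True
    let ?n = "deg x"
    have xc: "x \<in> cells C ?n" using deg_X True .
    have "mm Dm Dm x z = (\<Sum>y\<in>cells C (?n - 1). Dm x y * Dm y z)"
      unfolding mm_def
      by (rule sum.mono_neutral_right[OF finX]) (auto simp: Dm_def cells_X)
    also have "\<dots> = (\<Sum>y\<in>cells C (?n - 1). bd C ?n x y * (if z \<in> cells C (?n - 2) then bd C (?n - 1) y z else 0))"
      by (rule sum.cong[OF refl]) (auto simp: Dm_def True deg_eq cells_X)
    also have "\<dots> = 0"
    proof (cases "z \<in> cells C (?n - 2)")
      case True thus ?thesis using dd0[OF xc] by simp
    qed simp
    finally show ?thesis by simp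
  qed
qed

lemma JJ: "mm Jm Jm = 0"
  unfolding mm_def using Jm_nz2 TS_disj by (force simp: fun_eq_iff intro: sum.neutral)

lemma PT_DJ: "mm (dg Tall) (mm Dm Jm) = dg Tall"
proof (rule ext, rule ext)
  fix x z
  show "mm (dg Tall) (mm Dm Jm) x z = dg Tall x z"
  proof (cases "x \<in> X \<and> x \<in> Tall")
    case False thus ?thesis by (simp add: mm_dg_l, auto simp: dg_def)
  next
    case True
    let ?n = "deg x"
    have xc: "x \<in> cells C ?n" using deg_X True by blast
    have xt: "x \<in> tgt C V ?n" using Tall_tgt[OF xc] True by simp
    have "mm Dm Jm x z = (\<Sum>y\<in>src C V (?n - 1). Dm x y * Jm y z)"
      unfolding mm_def
    proof (rule sum.mono_neutral_right[OF finX])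
      show "src C V (deg x - 1) \<subseteq> X" unfolding src_def using cells_X by blast
      show "\<forall>i\<in>X - src C V (deg x - 1). Dm x i * Jm i z = 0"
      proof
        fix y assume y: "y \<in> X - src C V (deg x - 1)"
        show "Dm x y * Jm y z = 0"
        proof (cases "Dm x y = 0 \<or> Jm y z = 0")
          case False
          hence "y \<in> cells C (?n - 1)" "y \<in> src C V (deg y)" unfolding Dm_def using Jm_nz by (auto split: if_splits)
          thus ?thesis using y deg_eq by auto
        qed auto
      qed
    qed
    also have "\<dots> = (\<Sum>y\<in>src C V (?n - 1). bd C ?n x y * inv21 C V ?n y z)"
      by (rule sum.cong[OF refl]) (auto simp: Dm_def Jm_def True src_def deg_eq cells_X)
    also have "\<dots> = dg Tall x z"
    proof (cases "z \<in> tgt C V ?n")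
      case True
      thus ?thesis using inv21_right[OF xt True] xc True Tall_tgt cells_X
        unfolding delta_def dg_def tgt_def by auto
    next
      case False
      hence "x \<noteq> z" using xt by auto
      thus ?thesis using False inv21_supp[of ?n _ z] unfolding dg_def by (force intro: sum.neutral)
    qed
    finally show ?thesis unfolding mm_dg_l using True by simp
  qed
qed

lemma JD_PS: "mm (mm Jm Dm) (dg Sall) = dg Sall"
proof (rule ext, rule ext)
  fix x z
  show "mm (mm Jm Dm) (dg Sall) x z = dg Sall x z"
  proof (cases "z \<in> X \<and> z \<in> Sall")
    case False thus ?thesis by (simp add: mm_dg_r, auto simp: dg_def)
  next
    case zs: True
    show ?thesis
    proof (cases "x \<in> X \<and> x \<in> src C V (deg x)")
      case False
      have "mm Jm Dm x z = 0" unfolding mm_def using False Jm_nz by (force intro: sum.neutral)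
      moreover have "dg Sall x z = 0" using False zs deg_X Sall_src unfolding dg_def by auto
      ultimately show ?thesis unfolding mm_dg_r using zs by simp
    next
      case True
      let ?n = "deg x"
      have xs: "x \<in> src C V (?n + 1 - 1)" using True by simp
      have "mm Jm Dm x z = (\<Sum>y\<in>tgt C V (?n + 1). Jm x y * Dm y z)"
        unfolding mm_def
        by (rule sum.mono_neutral_right[OF finX]) (auto simp: tgt_def cells_X dest: Jm_nz)
      also have "\<dots> = (\<Sum>y\<in>tgt C V (?n + 1). inv21 C V (?n + 1) x y * (if z \<in> cells C ?n then bd C (?n + 1) y z else 0))"
        by (rule sum.cong[OF refl]) (auto simp: Dm_def Jm_def True tgt_def deg_eq cells_X)
      also have "\<dots> = dg Sall x z"
      proof (cases "z \<in> cells C ?n")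
        case True
        hence zs': "z \<in> src C V (?n + 1 - 1)" using Sall_src zs by simp
        show ?thesis using inv21_left[OF xs zs'] True zs \<open>x \<in> X \<and> _\<close>
          unfolding delta_def dg_def by auto
      next
        case False
        hence "x \<noteq> z" using deg_X \<open>x \<in> X \<and> _\<close> by auto
        thus ?thesis using False unfolding dg_def by simp
      qed
      finally show ?thesis unfolding mm_dg_r using zs by simp
    qed
  qed
qed

lemma J_PK: "mm Jm (dg Kall) = 0"
  unfolding mm_dg_r Kall_def using Jm_nz2 by (auto simp: fun_eq_iff)
lemma PK_J: "mm (dg Kall) Jm = 0"
  unfolding mm_dg_l Kall_def using Jm_nz2 by (auto simp: fun_eq_iff)

lemma split3: "dg Tall + dg Sall + dg Kall = dg X"
  unfolding dg_def Kall_def using TS_disj by (auto simp: fun_eq_iff)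

end

context dctx begin

abbreviation "II \<equiv> dg X"
abbreviation "PK \<equiv> dg Kall"
abbreviation "PT \<equiv> dg Tall"
abbreviation "PS \<equiv> dg Sall"
definition "E1 = II - mm Jm Dm"
definition "E2 = II - mm Dm Jm"
definition "Fm = mm E1 PK"
definition "Gm = mm PK E2"
definition "Dp = mm PK (mm (mm Dm E1) PK)"

lemmas rsc = rs_mm cs_mm rs_dg cs_dg rs_diff cs_diff rs_D cs_D rs_J cs_J
lemmas mmd = mm_diff_l mm_diff_r mm_add_l mm_add_r mm_0_l mm_0_r

lemma DD': "mm Dm (mm Dm Z) = 0" by (simp add: mm_assoc[symmetric] DD mm_0_l)
lemma JJ': "mm Jm (mm Jm Z) = 0" by (simp add: mm_assoc[symmetric] JJ mm_0_l)
lemma PK_J': "mm PK (mm Jm Z) = 0" by (simp add: mm_assoc[symmetric] PK_J mm_0_l)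
lemma PK_PK': "mm PK (mm PK Z) = mm PK Z" by (simp add: mm_assoc[symmetric] dg_dg)
lemma rsE1: "rs E1" unfolding E1_def by (simp add: rsc)
lemma csE1: "cs E1" unfolding E1_def by (simp add: rsc)
lemma rsE2: "rs E2" unfolding E2_def by (simp add: rsc)
lemma csE2: "cs E2" unfolding E2_def by (simp add: rsc)

lemma I_l: "rs B \<Longrightarrow> mm II B = B" by (rule mm_I_l)
lemma I_r: "cs B \<Longrightarrow> mm B II = B" by (rule mm_I_r)

lemma L1: "mm E1 PS = 0"
  unfolding E1_def by (simp add: mmd JD_PS I_l rsc)

lemma L2: "mm PT E2 = 0"
  unfolding E2_def by (simp add: mmd PT_DJ I_r rsc)

lemma L3: "mm E1 E2 = II - mm Jm Dm - mm Dm Jm"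
  unfolding E1_def E2_def by (simp add: mmd I_l I_r rsc mm_assoc DD')

lemma Q: "mm (mm E1 PK) E2 = II - mm Jm Dm - mm Dm Jm"
proof -
  have "mm E1 E2 = mm (mm E1 II) E2" using csE1 by (simp add: I_r)
  also have "\<dots> = mm (mm E1 PT) E2 + mm (mm E1 PS) E2 + mm (mm E1 PK) E2"
    unfolding split3[symmetric] by (simp add: mmd)
  also have "\<dots> = mm (mm E1 PK) E2" by (simp add: L1 mm_assoc L2 mmd)
  finally show ?thesis using L3 by simp
qed

lemma E2E1: "mm E2 E1 = II - mm Jm Dm - mm Dm Jm"
  unfolding E1_def E2_def by (simp add: mmd I_l I_r rsc mm_assoc JJ')

lemma T_fg: "mm Gm Fm = PK"
proof -
  have "mm Gm Fm = mm PK (mm (mm E2 E1) PK)" unfolding Gm_def Fm_def by (simp add: mm_assoc)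
  thus ?thesis unfolding E2E1 by (simp add: mmd mm_assoc PK_J' J_PK I_l rsc dg_dg)
qed

lemma T_id: "mm Fm Gm + mm Jm Dm + mm Dm Jm = II"
proof -
  have "mm Fm Gm = mm (mm E1 PK) E2" unfolding Fm_def Gm_def by (simp add: mm_assoc PK_PK')
  thus ?thesis using Q by simp
qed

lemma T_fh: "mm Jm Fm = 0"
  unfolding Fm_def E1_def by (simp add: mmd mm_assoc I_l rsc JJ' J_PK)

lemma T_hg: "mm Gm Jm = 0"
  unfolding Gm_def E2_def by (simp add: mmd mm_assoc I_r rsc JJ' JJ PK_J)

lemma DE1: "mm Dm E1 = mm E2 Dm"
  unfolding E1_def E2_def by (simp add: mmd mm_assoc I_l I_r rsc)

lemma Dp_1: "Dp = mm PK (mm Dm (mm E1 PK))" unfolding Dp_def by (simp add: mm_assoc)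
lemma Dp_2: "Dp = mm PK (mm E2 (mm Dm PK))" unfolding Dp_def DE1 by (simp add: mm_assoc)

lemma T_fchain: "mm Fm Dp = mm Dm Fm"
proof -
  have "mm Fm Dp = mm (mm (mm E1 PK) E2) (mm Dm PK)"
    unfolding Fm_def Dp_2 by (simp add: mm_assoc PK_PK')
  also have "\<dots> = mm Dm (mm E1 PK)"
    unfolding Q by (simp add: E1_def mmd mm_assoc I_l I_r rsc DD')
  finally show ?thesis unfolding Fm_def .
qed

lemma T_gchain: "mm Dp Gm = mm Gm Dm"
proof -
  have "mm Dp Gm = mm PK (mm Dm (mm (mm E1 PK) E2))"
    unfolding Gm_def Dp_1 by (simp add: mm_assoc PK_PK')
  also have "\<dots> = mm PK (mm E2 Dm)"
    unfolding Q by (simp add: E2_def mmd mm_assoc I_l I_r rsc DD')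
  finally show ?thesis unfolding Gm_def by (simp add: mm_assoc)
qed

lemma T_dd: "mm Dp Dp = 0"
proof -
  have "mm Dp Dp = mm (mm PK (mm Dm (mm E1 PK))) (mm PK (mm E2 (mm Dm PK)))"
    by (metis Dp_1 Dp_2)
  also have "\<dots> = mm PK (mm Dm (mm (mm (mm E1 PK) E2) (mm Dm PK)))"
    by (simp add: mm_assoc PK_PK')
  also have "\<dots> = 0"
    unfolding Q by (simp add: mmd mm_assoc I_l I_r rsc DD')
  finally show ?thesis .
qed

end

context dctx begin

lemma conv:
  assumes "Y \<subseteq> X" "\<And>y. y \<in> X \<Longrightarrow> y \<notin> Y \<Longrightarrow> A x y * B y z = 0"
    "\<And>y. y \<in> Y \<Longrightarrow> A x y * B y z = a y * b y"
  shows "mm A B x z = (\<Sum>y\<in>Y. a y * b y)"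
proof -
  have "mm A B x z = (\<Sum>y\<in>Y. A x y * B y z)" unfolding mm_def
    by (rule sum.mono_neutral_right[OF finX]) (use assms in auto)
  also have "\<dots> = (\<Sum>y\<in>Y. a y * b y)" by (rule sum.cong) (use assms in auto)
  finally show ?thesis .
qed

lemma crit_X: "crit C V n \<subseteq> X" unfolding crit_def using cells_X by blast
lemma cells_sub_X: "cells C n \<subseteq> X" using cells_X by blast

lemma Dm_nz: "Dm x y \<noteq> 0 \<Longrightarrow> x \<in> X \<and> y \<in> cells C (deg x - 1)" unfolding Dm_def by (auto split: if_splits)
lemma Dm_pt: "x \<in> cells C n \<Longrightarrow> y \<in> cells C (n - 1) \<Longrightarrow> Dm x y = bd C n x y"
  unfolding Dm_def using cells_X deg_eq by auto

lemma JD_nz: "mm Jm Dm a b \<noteq> 0 \<Longrightarrow> a \<in> X \<and> b \<in> cells C (deg a)"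
proof -
  assume "mm Jm Dm a b \<noteq> 0"
  then obtain y where "Jm a y * Dm y b \<noteq> 0" unfolding mm_def by (meson sum.neutral)
  hence "Jm a y \<noteq> 0" "Dm y b \<noteq> 0" by auto
  thus ?thesis using Jm_nz Dm_nz unfolding tgt_def using deg_eq by fastforce
qed

lemma DJ_nz: "mm Dm Jm a b \<noteq> 0 \<Longrightarrow> a \<in> X \<and> b \<in> cells C (deg a)"
proof -
  assume "mm Dm Jm a b \<noteq> 0"
  then obtain y where "Dm a y * Jm y b \<noteq> 0" unfolding mm_def by (meson sum.neutral)
  hence "Jm y b \<noteq> 0" "Dm a y \<noteq> 0" by auto
  thus ?thesis using Jm_nz Dm_nz unfolding tgt_def using deg_eq by fastforce
qed

lemma JD_pt: assumes a: "a \<in> cells C n" and c: "c \<in> cells C n"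
  shows "mm Jm Dm a c = (if a \<in> src C V n then (\<Sum>t\<in>tgt C V (n + 1). inv21 C V (n + 1) a t * bd C (n + 1) t c) else 0)"
proof (cases "a \<in> src C V n")
  case True
  have "mm Jm Dm a c = (\<Sum>t\<in>tgt C V (n + 1). inv21 C V (n + 1) a t * bd C (n + 1) t c)"
  proof (rule conv)
    show "tgt C V (n + 1) \<subseteq> X" unfolding tgt_def using cells_X by blast
    fix y assume "y \<in> X" "y \<notin> tgt C V (n + 1)"
    thus "Jm a y * Dm y c = 0" using Jm_nz[of a y] a deg_eq by auto
  next
    fix y assume "y \<in> tgt C V (n + 1)"
    thus "Jm a y * Dm y c = inv21 C V (n + 1) a y * bd C (n + 1) y c"
      using a c Dm_pt[of y "n+1" c] unfolding Jm_def tgt_def using deg_eq cells_X by auto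
  qed
  thus ?thesis using True by simp
next
  case False
  hence "mm Jm Dm a c = 0" unfolding mm_def using Jm_nz a deg_eq by (force intro: sum.neutral)
  thus ?thesis using False by simp
qed

lemma DJ_pt: assumes c: "c \<in> cells C n" and b: "b \<in> cells C n"
  shows "mm Dm Jm c b = (if b \<in> tgt C V n then (\<Sum>s\<in>src C V (n - 1). bd C n c s * inv21 C V n s b) else 0)"
proof (cases "b \<in> tgt C V n")
  case True
  have "mm Dm Jm c b = (\<Sum>s\<in>src C V (n - 1). bd C n c s * inv21 C V n s b)"
  proof (rule conv)
    show "src C V (n - 1) \<subseteq> X" unfolding src_def using cells_X by blast
    fix y assume y: "y \<in> X" "y \<notin> src C V (n - 1)"
    show "Dm c y * Jm y b = 0"
    proof (rule ccontr)
      assume "Dm c y * Jm y b \<noteq> 0"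
      hence "Dm c y \<noteq> 0" "Jm y b \<noteq> 0" by auto
      thus False using Dm_nz Jm_nz y c deg_eq by fastforce
    qed
  next
    fix y assume "y \<in> src C V (n - 1)"
    thus "Dm c y * Jm y b = bd C n c y * inv21 C V n y b"
      using c Dm_pt[of c n y] unfolding Jm_def src_def using deg_eq cells_X by auto
  qed
  thus ?thesis using True by simp
next
  case False
  have "mm Dm Jm c b = 0" unfolding mm_def
  proof (rule sum.neutral, rule ballI)
    fix y assume "y \<in> X"
    show "Dm c y * Jm y b = 0"
    proof (rule ccontr)
      assume "Dm c y * Jm y b \<noteq> 0"
      hence "Dm c y \<noteq> 0" "Jm y b \<noteq> 0" by auto
      hence "y \<in> cells C (n - 1)" "b \<in> tgt C V (deg y + 1)" using Dm_nz Jm_nz c deg_eq by fastforce+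
      thus False using False deg_eq by auto
    qed
  qed
  thus ?thesis using False by simp
qed

lemma II_pt: "II a b = (if a \<in> X then delta a b else 0)" unfolding dg_def delta_def by auto

lemma Fm_alt: "Fm a b = (if b \<in> Kall \<and> b \<in> X then II a b - mm Jm Dm a b else 0)"
  unfolding Fm_def E1_def mm_dg_r by auto
lemma Gm_alt: "Gm a b = (if a \<in> Kall \<and> a \<in> X then II a b - mm Dm Jm a b else 0)"
  unfolding Gm_def E2_def mm_dg_l by auto

lemma Fm_nz: "Fm a b \<noteq> 0 \<Longrightarrow> a \<in> X \<and> b \<in> crit C V (deg a)"
  unfolding Fm_alt II_pt Kall_crit using JD_nz deg_X by (auto simp: delta_def split: if_splits)
lemma Gm_nz: "Gm a b \<noteq> 0 \<Longrightarrow> a \<in> crit C V (deg a) \<and> b \<in> cells C (deg a)"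
  unfolding Gm_alt II_pt Kall_crit using DJ_nz deg_X by (auto simp: delta_def split: if_splits)

lemma Fm_pt: assumes a: "a \<in> cells C n" and c: "c \<in> crit C V n"
  shows "Fm a c = fst (vf_red C V) n a c"
proof -
  have cc: "c \<in> cells C n" "c \<in> Kall" using c Kall_crit by auto
  show ?thesis
    unfolding Fm_alt vf_red_def using cc cells_X[OF cc(1)] cells_X[OF a] JD_pt[OF a cc(1)] c src_tgt_disj
    by (auto simp: II_pt delta_def crit_def)
qed

lemma Gm_pt: assumes c: "c \<in> crit C V n" and b: "b \<in> cells C n"
  shows "Gm c b = fst (snd (vf_red C V)) n c b"
proof -
  have cc: "c \<in> cells C n" "c \<in> Kall" using c Kall_crit by auto
  show ?thesis
    unfolding Gm_alt vf_red_def using cc cells_X[OF cc(1)] cells_X[OF b] DJ_pt[OF cc(1) b] c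
    by (auto simp: II_pt delta_def crit_def)
qed

lemma Jm_pt: assumes a: "a \<in> cells C n" shows "Jm a b = snd (snd (vf_red C V)) n a b"
  unfolding vf_red_def Jm_def using a cells_X deg_eq inv21_supp[of "n+1" a b] by auto

lemma Dp_alt: "Dp a b = (if a \<in> Kall \<and> a \<in> X \<and> b \<in> Kall \<and> b \<in> X then Dm a b - mm Dm (mm Jm Dm) a b else 0)"
  unfolding Dp_def E1_def mm_dg_r mm_dg_l by (auto simp: mmd mm_I_r cs_D)

lemma DJD_nz: "mm Dm (mm Jm Dm) a b \<noteq> 0 \<Longrightarrow> b \<in> cells C (deg a - 1)"
proof -
  assume "mm Dm (mm Jm Dm) a b \<noteq> 0"
  then obtain y where "Dm a y * mm Jm Dm y b \<noteq> 0" unfolding mm_def by (meson sum.neutral)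
  hence "Dm a y \<noteq> 0" "mm Jm Dm y b \<noteq> 0" by auto
  thus ?thesis using Dm_nz JD_nz deg_eq by fastforce
qed

lemma Dp_nz: assumes "Dp a b \<noteq> 0" shows "a \<in> crit C V (deg a) \<and> b \<in> crit C V (deg a - 1)"
proof -
  have h: "a \<in> Kall" "a \<in> X" "b \<in> Kall" "Dm a b - mm Dm (mm Jm Dm) a b \<noteq> 0"
    using assms unfolding Dp_alt by (auto split: if_splits)
  have "b \<in> cells C (deg a - 1)"
  proof (cases "Dm a b = 0")
    case True thus ?thesis using h(4) DJD_nz by auto
  next
    case False thus ?thesis using Dm_nz by auto
  qed
  thus ?thesis using h deg_X Kall_crit by auto
qed

lemma Dp_pt: assumes c: "c \<in> crit C V n" and c': "c' \<in> crit C V (n - 1)"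
  shows "Dp c c' = bd (crit_complex C V) n c c'"
proof -
  have cc: "c \<in> cells C n" "c \<in> Kall" "c' \<in> cells C (n - 1)" "c' \<in> Kall" using c c' Kall_crit by auto
  have "mm Dm (mm Jm Dm) c c' = (\<Sum>y\<in>cells C (n - 1). bd C n c y * mm Jm Dm y c')"
  proof (rule conv)
    show "cells C (n - 1) \<subseteq> X" by (rule cells_sub_X)
    fix y assume "y \<in> X" "y \<notin> cells C (n - 1)" thus "Dm c y * mm Jm Dm y c' = 0"
      using Dm_nz[of c y] cc deg_eq by fastforce
  next
    fix y assume "y \<in> cells C (n - 1)" thus "Dm c y * mm Jm Dm y c' = bd C n c y * mm Jm Dm y c'"
      using Dm_pt cc by simp
  qed
  also have "\<dots> = (\<Sum>y\<in>cells C (n - 1). bd C n c y * (if y \<in> src C V (n - 1) then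
       (\<Sum>t\<in>tgt C V n. inv21 C V n y t * bd C n t c') else 0))"
    by (rule sum.cong[OF refl]) (use JD_pt[OF _ cc(3)] in simp)
  also have "\<dots> = (\<Sum>y\<in>src C V (n - 1). bd C n c y * (\<Sum>t\<in>tgt C V n. inv21 C V n y t * bd C n t c'))"
    by (rule sum.mono_neutral_cong_right) (auto simp: fin_cells src_def)
  also have "\<dots> = (\<Sum>s\<in>src C V (n - 1). \<Sum>t\<in>tgt C V n. bd C n c s * inv21 C V n s t * bd C n t c')"
    by (simp add: sum_distrib_left mult.assoc)
  finally show ?thesis unfolding Dp_alt crit_complex_def using cc cells_X Dm_pt[OF cc(1) cc(3)] by simp
qed

end

context dctx begin

abbreviation "fv \<equiv> fst (vf_red C V)"
abbreviation "gv \<equiv> fst (snd (vf_red C V))"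
abbreviation "hv \<equiv> snd (snd (vf_red C V))"
abbreviation "DC \<equiv> crit_complex C V"

lemma DC_cells[simp]: "cells DC = crit C V" unfolding crit_complex_def by simp
lemma DC_filt[simp]: "filt DC i n = filt C i n \<inter> crit C V n" unfolding crit_complex_def by simp
lemma DC_flen[simp]: "flen DC = flen C" unfolding crit_complex_def by simp

lemma crit_cells: "c \<in> crit C V n \<Longrightarrow> c \<in> cells C n" unfolding crit_def by auto

lemma mmpt: "(A - B) x z = A x z - B x z" "(A + B) x z = A x z + B x z" "(0::'a\<Rightarrow>'a\<Rightarrow>int) x z = 0"
  by simp_all

lemma red: "is_reduction C DC fv gv hv"
  unfolding is_reduction_def is_chain_map_def
proof (intro conjI allI ballI)
  fix n a c assume a: "a \<in> cells C n" and c: "c \<in> cells DC (n - 1)"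
  have "mm Fm Dp a c = (\<Sum>b\<in>cells DC n. fv n a b * bd DC n b c)"
  proof (rule conv)
    show "cells DC n \<subseteq> X" using crit_X by simp
    fix y assume "y \<in> X" "y \<notin> cells DC n" thus "Fm a y * Dp y c = 0"
      using Fm_nz[of a y] deg_eq[OF a] by auto
  next
    fix y assume "y \<in> cells DC n" thus "Fm a y * Dp y c = fv n a y * bd DC n y c"
      using Fm_pt[OF a] Dp_pt c by simp
  qed
  moreover have "mm Dm Fm a c = (\<Sum>a'\<in>cells C (n - 1). bd C n a a' * fv (n - 1) a' c)"
  proof (rule conv)
    show "cells C (n - 1) \<subseteq> X" by (rule cells_sub_X)
    fix y assume "y \<in> X" "y \<notin> cells C (n - 1)" thus "Dm a y * Fm y c = 0"
      using Dm_nz[of a y] deg_eq[OF a] by auto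
  next
    fix y assume "y \<in> cells C (n - 1)" thus "Dm a y * Fm y c = bd C n a y * fv (n - 1) y c"
      using Fm_pt c Dm_pt[OF a] by simp
  qed
  ultimately show "(\<Sum>b\<in>cells DC n. fv n a b * bd DC n b c) = (\<Sum>a'\<in>cells C (n - 1). bd C n a a' * fv (n - 1) a' c)"
    using T_fchain by metis
next
  fix n a c assume a: "a \<in> cells DC n" and c: "c \<in> cells C (n - 1)"
  have ac: "a \<in> cells C n" using a crit_cells by simp
  have "mm Gm Dm a c = (\<Sum>b\<in>cells C n. gv n a b * bd C n b c)"
  proof (rule conv)
    show "cells C n \<subseteq> X" by (rule cells_sub_X)
    fix y assume "y \<in> X" "y \<notin> cells C n" thus "Gm a y * Dm y c = 0"
      using Gm_nz[of a y] deg_eq[OF ac] by auto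
  next
    fix y assume "y \<in> cells C n" thus "Gm a y * Dm y c = gv n a y * bd C n y c"
      using Gm_pt a c Dm_pt by simp
  qed
  moreover have "mm Dp Gm a c = (\<Sum>a'\<in>cells DC (n - 1). bd DC n a a' * gv (n - 1) a' c)"
  proof (rule conv)
    show "cells DC (n - 1) \<subseteq> X" using crit_X by simp
    fix y assume "y \<in> X" "y \<notin> cells DC (n - 1)" thus "Dp a y * Gm y c = 0"
      using Dp_nz[of a y] deg_eq[OF ac] by auto
  next
    fix y assume "y \<in> cells DC (n - 1)" thus "Dp a y * Gm y c = bd DC n a y * gv (n - 1) y c"
      using Gm_pt c Dp_pt a by simp
  qed
  ultimately show "(\<Sum>b\<in>cells C n. gv n a b * bd C n b c) = (\<Sum>a'\<in>cells DC (n - 1). bd DC n a a' * gv (n - 1) a' c)"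
    using T_gchain by metis
next
  fix n b b' assume b: "b \<in> cells DC n" and b': "b' \<in> cells DC n"
  have "mm Gm Fm b b' = (\<Sum>a\<in>cells C n. gv n b a * fv n a b')"
  proof (rule conv)
    show "cells C n \<subseteq> X" by (rule cells_sub_X)
    fix y assume "y \<in> X" "y \<notin> cells C n" thus "Gm b y * Fm y b' = 0"
      using Gm_nz[of b y] b crit_cells deg_eq by fastforce
  next
    fix y assume "y \<in> cells C n" thus "Gm b y * Fm y b' = gv n b y * fv n y b'"
      using Gm_pt Fm_pt b b' by simp
  qed
  moreover have "PK b b' = delta b b'" using b b' Kall_crit crit_X unfolding dg_def delta_def by auto
  ultimately show "(\<Sum>a\<in>cells C n. gv n b a * fv n a b') = delta b b'" using T_fg by simp
next
  fix n a a' assume a: "a \<in> cells C n" and a': "a' \<in> cells C n"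
  have 1: "mm Fm Gm a a' = (\<Sum>b\<in>cells DC n. fv n a b * gv n b a')"
  proof (rule conv)
    show "cells DC n \<subseteq> X" using crit_X by simp
    fix y assume "y \<in> X" "y \<notin> cells DC n" thus "Fm a y * Gm y a' = 0"
      using Fm_nz[of a y] deg_eq[OF a] by auto
  next
    fix y assume "y \<in> cells DC n" thus "Fm a y * Gm y a' = fv n a y * gv n y a'"
      using Fm_pt[OF a] Gm_pt a' by simp
  qed
  have 2: "mm Jm Dm a a' = (\<Sum>x\<in>cells C (n + 1). hv n a x * bd C (n + 1) x a')"
  proof (rule conv)
    show "cells C (n + 1) \<subseteq> X" by (rule cells_sub_X)
    fix y assume "y \<in> X" "y \<notin> cells C (n + 1)" thus "Jm a y * Dm y a' = 0"
      using Jm_nz[of a y] deg_eq[OF a] unfolding tgt_def by auto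
  next
    fix y assume "y \<in> cells C (n + 1)" thus "Jm a y * Dm y a' = hv n a y * bd C (n + 1) y a'"
      using Jm_pt[OF a] Dm_pt a' by simp
  qed
  have 3: "mm Dm Jm a a' = (\<Sum>y\<in>cells C (n - 1). bd C n a y * hv (n - 1) y a')"
  proof (rule conv)
    show "cells C (n - 1) \<subseteq> X" by (rule cells_sub_X)
    fix y assume "y \<in> X" "y \<notin> cells C (n - 1)" thus "Dm a y * Jm y a' = 0"
      using Dm_nz[of a y] deg_eq[OF a] by auto
  next
    fix y assume "y \<in> cells C (n - 1)" thus "Dm a y * Jm y a' = bd C n a y * hv (n - 1) y a'"
      using Jm_pt Dm_pt[OF a] by simp
  qed
  have "II a a' = delta a a'" using a cells_X II_pt by simp
  moreover have "(mm Fm Gm + mm Jm Dm + mm Dm Jm) a a' = II a a'" using T_id by simp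
  ultimately show "(\<Sum>b\<in>cells DC n. fv n a b * gv n b a') + (\<Sum>x\<in>cells C (n + 1). hv n a x * bd C (n + 1) x a') +
       (\<Sum>y\<in>cells C (n - 1). bd C n a y * hv (n - 1) y a') = delta a a'"
    using 1 2 3 by simp
next
  fix n a b assume a: "a \<in> cells C n" and b: "b \<in> cells DC (n + 1)"
  have "mm Jm Fm a b = (\<Sum>x\<in>cells C (n + 1). hv n a x * fv (n + 1) x b)"
  proof (rule conv)
    show "cells C (n + 1) \<subseteq> X" by (rule cells_sub_X)
    fix y assume "y \<in> X" "y \<notin> cells C (n + 1)" thus "Jm a y * Fm y b = 0"
      using Jm_nz[of a y] deg_eq[OF a] unfolding tgt_def by auto
  next
    fix y assume "y \<in> cells C (n + 1)" thus "Jm a y * Fm y b = hv n a y * fv (n + 1) y b"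
      using Jm_pt[OF a] Fm_pt b by simp
  qed
  thus "(\<Sum>x\<in>cells C (n + 1). hv n a x * fv (n + 1) x b) = 0" using T_fh by simp
next
  fix n b a assume b: "b \<in> cells DC n" and a: "a \<in> cells C (n + 1)"
  have "mm Gm Jm b a = (\<Sum>x\<in>cells C n. gv n b x * hv n x a)"
  proof (rule conv)
    show "cells C n \<subseteq> X" by (rule cells_sub_X)
    fix y assume "y \<in> X" "y \<notin> cells C n" thus "Gm b y * Jm y a = 0"
      using Gm_nz[of b y] b crit_cells deg_eq by fastforce
  next
    fix y assume "y \<in> cells C n" thus "Gm b y * Jm y a = gv n b y * hv n y a"
      using Gm_pt b Jm_pt by simp
  qed
  thus "(\<Sum>x\<in>cells C n. gv n b x * hv n x a) = 0" using T_hg by simp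
next
  fix n a a' assume a: "a \<in> cells C n" and a': "a' \<in> cells C (n + 2)"
  have "mm Jm Jm a a' = (\<Sum>x\<in>cells C (n + 1). hv n a x * hv (n + 1) x a')"
  proof (rule conv)
    show "cells C (n + 1) \<subseteq> X" by (rule cells_sub_X)
    fix y assume "y \<in> X" "y \<notin> cells C (n + 1)" thus "Jm a y * Jm y a' = 0"
      using Jm_nz[of a y] deg_eq[OF a] unfolding tgt_def by auto
  next
    fix y assume "y \<in> cells C (n + 1)" thus "Jm a y * Jm y a' = hv n a y * hv (n + 1) y a'"
      using Jm_pt[OF a] Jm_pt by simp
  qed
  thus "(\<Sum>x\<in>cells C (n + 1). hv n a x * hv (n + 1) x a') = 0" using JJ by simp
qed

end

lemma red_cong:
  assumes r: "is_reduction D E f g h"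
    and ef: "\<And>n a e. e \<in> cells E n \<Longrightarrow> f' n a e = f n a e"
    and eg: "\<And>n e a. e \<in> cells E n \<Longrightarrow> g' n e a = g n e a"
  shows "is_reduction D E f' g' h"
  using r unfolding is_reduction_def is_chain_map_def
  by (simp add: ef eg cong: sum.cong)

context dctx begin

lemma inv21_filt:
  assumes fid: "\<forall>(s, t)\<in>V. fidx C s = fidx C t"
    and nz: "inv21 C V n s t \<noteq> 0" and sf: "s \<in> filt C i (n - 1)"
  shows "t \<in> filt C i n"
proof -
  let ?S = "src C V (n - 1)"
  have sS: "s \<in> ?S" and J0nz: "J0 n s t \<noteq> 0" using nz unfolding inv21_eq Jn_def by (auto split: if_splits)
  have "\<forall>t i. J0 n s t \<noteq> 0 \<longrightarrow> s \<in> filt C i (n - 1) \<longrightarrow> t \<in> filt C i n"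
    using sS
  proof (induction s rule: wf_induct[OF wfR[of n]])
    case (1 s)
    show ?case
    proof (intro allI impI)
      fix t i assume nz: "J0 n s t \<noteq> 0" and sf: "s \<in> filt C i (n - 1)"
      have sv: "(s, tau s) \<in> V" "tau s \<in> tgt C V n" using src_V[OF 1(2)] by auto
      have sc: "s \<in> cells C (n - 1)" using 1(2) unfolding src_def by auto
      have tc: "tau s \<in> cells C n" using sv unfolding tgt_def by auto
      have tf: "tau s \<in> filt C i n"
        using filt_fidx[OF sc] filt_fidx[OF tc] sf fid sv(1) by auto
      show "t \<in> filt C i n"
      proof (cases "tau s = t")
        case True thus ?thesis using tf by simp
      next
        case False
        hence "(\<Sum>s'\<in>?S - {s}. bd C n (tau s) s' * J0 n s' t) \<noteq> 0"
          using nz J0_eq[OF 1(2), of t] by (auto simp: delta_def)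
        then obtain s' where s': "s' \<in> ?S - {s}" "bd C n (tau s) s' * J0 n s' t \<noteq> 0"
          by (meson sum.neutral)
        have "(s', s) \<in> R n" using s' 1(2) unfolding R_def by auto
        moreover have "s' \<in> filt C i (n - 1)"
          using filt_bd[OF tf] s' unfolding src_def by auto
        ultimately show ?thesis using 1(1) s' by auto
      qed
    qed
  qed
  thus ?thesis using J0nz sf by blast
qed

lemma DC_fc: assumes fid: "\<forall>(s, t)\<in>V. fidx C s = fidx C t"
  shows "is_filtered_complex DC"
  unfolding is_filtered_complex_def DC_cells DC_filt DC_flen
proof (intro conjI allI ballI impI)
  fix n show "finite (crit C V n)" using fin_cells unfolding crit_def by simp
next
  fix n n' :: int assume "n \<noteq> n'" thus "crit C V n \<inter> crit C V n' = {}" using disj crit_cells by blast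
next
  fix n a c assume a: "a \<in> crit C V n" and c: "c \<in> crit C V (n - 2)"
  have "mm Dp Dp a c = (\<Sum>b\<in>crit C V (n - 1). bd DC n a b * bd DC (n - 1) b c)"
  proof (rule conv)
    show "crit C V (n - 1) \<subseteq> X" by (rule crit_X)
    fix y assume "y \<in> X" "y \<notin> crit C V (n - 1)" thus "Dp a y * Dp y c = 0"
      using Dp_nz[of a y] deg_eq[OF crit_cells[OF a]] by auto
  next
    fix y assume y: "y \<in> crit C V (n - 1)"
    have c': "c \<in> crit C V (n - 1 - 1)" using c by (simp add: algebra_simps)
    show "Dp a y * Dp y c = bd DC n a y * bd DC (n - 1) y c"
      using Dp_pt[OF a y] Dp_pt[OF y c'] by simp
  qed
  thus "(\<Sum>b\<in>crit C V (n - 1). bd DC n a b * bd DC (n - 1) b c) = 0" using T_dd by simp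
next
  fix n show "filt C 0 n \<inter> crit C V n = {}" using filt_0 by simp
next
  fix i n show "filt C i n \<inter> crit C V n \<subseteq> filt C (Suc i) n \<inter> crit C V n" using filt_mono[of i "Suc i"] by auto
next
  fix i n show "filt C i n \<inter> crit C V n \<subseteq> crit C V n" by auto
next
  fix n show "filt C (flen C) n \<inter> crit C V n = crit C V n" using filt_top crit_cells by auto
next
  fix i n t s assume t: "t \<in> filt C i n \<inter> crit C V n" and s: "s \<in> crit C V (n - 1)"
    and nz: "bd DC n t s \<noteq> 0"
  have sc: "s \<in> cells C (n - 1)" using s crit_cells by auto
  have tf: "t \<in> filt C i n" using t by auto
  have "s \<in> filt C i (n - 1)"
  proof (cases "bd C n t s = 0")
    case False thus ?thesis using filt_bd[OF tf sc] by simp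
  next
    case True
    hence "(\<Sum>s'\<in>src C V (n - 1). \<Sum>t'\<in>tgt C V n. bd C n t s' * inv21 C V n s' t' * bd C n t' s) \<noteq> 0"
      using nz unfolding crit_complex_def by simp
    then obtain s' where s': "s' \<in> src C V (n - 1)" "(\<Sum>t'\<in>tgt C V n. bd C n t s' * inv21 C V n s' t' * bd C n t' s) \<noteq> 0"
      by (meson sum.neutral)
    then obtain t' where t': "t' \<in> tgt C V n" "bd C n t s' * inv21 C V n s' t' * bd C n t' s \<noteq> 0"
      by (meson sum.neutral)
    have "s' \<in> filt C i (n - 1)" using filt_bd[OF tf] s' t' unfolding src_def by auto
    hence "t' \<in> filt C i n" using inv21_filt[OF fid] t' by auto
    thus ?thesis using filt_bd sc t' by auto
  qed
  thus "s \<in> filt C i (n - 1) \<inter> crit C V (n - 1)" using s by simp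
qed

definition "fc' = fst (comp_red DC (vf_red C V) id_red)"
definition "gc' = fst (snd (comp_red DC (vf_red C V) id_red))"
definition "hc' = snd (snd (comp_red DC (vf_red C V) id_red))"

lemma fc'_eq: "e \<in> crit C V n \<Longrightarrow> fc' n a e = fv n a e"
  unfolding fc'_def comp_red_def id_red_def using fin_cells
  by (simp add: case_prod_beta sum_delta_r crit_def)
lemma gc'_eq: "e \<in> crit C V n \<Longrightarrow> gc' n e a = gv n e a"
  unfolding gc'_def comp_red_def id_red_def using fin_cells
  by (simp add: case_prod_beta sum_delta_l crit_def)
lemma hc'_eq: "hc' = hv"
  unfolding hc'_def comp_red_def id_red_def by (simp add: case_prod_beta)

lemma comp_red_eq: "comp_red DC (vf_red C V) id_red = (fc', gc', hc')"
  unfolding fc'_def gc'_def hc'_def by simp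

lemma final_props: assumes fid: "\<forall>(s, t)\<in>V. fidx C s = fidx C t"
  shows "is_filtered_complex DC \<and> is_reduction C DC fc' gc' hc' \<and>
       is_filtered_map C DC 0 fc' \<and> is_filtered_map DC C 0 gc' \<and> is_filtered_map C C 1 hc'"
proof (intro conjI)
  show "is_filtered_complex DC" by (rule DC_fc[OF fid])
  show "is_reduction C DC fc' gc' hc'" unfolding hc'_eq
    by (rule red_cong[OF red]) (simp_all add: fc'_eq gc'_eq)
  show "is_filtered_map C DC 0 fc'" unfolding is_filtered_map_def
  proof (intro allI impI)
    fix i n a b assume a: "a \<in> filt C i n" and b: "b \<in> cells DC (n + 0)" and nz: "fc' n a b \<noteq> 0"
    have bc: "b \<in> crit C V n" using b by simp
    have nz': "fv n a b \<noteq> 0" using nz fc'_eq[OF bc] by simp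
    have "b \<in> filt C i n"
    proof (cases "a \<in> tgt C V n")
      case True thus ?thesis using nz' unfolding vf_red_def by simp
    next
      case nt: False
      show ?thesis
      proof (cases "a \<in> src C V n")
        case True
        hence "(\<Sum>t\<in>tgt C V (n + 1). inv21 C V (n + 1) a t * bd C (n + 1) t b) \<noteq> 0"
          using nz' nt unfolding vf_red_def by simp
        then obtain t where t: "t \<in> tgt C V (n + 1)" "inv21 C V (n + 1) a t * bd C (n + 1) t b \<noteq> 0"
          by (meson sum.neutral)
        have "a \<in> filt C i (n + 1 - 1)" using a by simp
        hence "t \<in> filt C i (n + 1)" using inv21_filt[OF fid] t by auto
        thus ?thesis using filt_bd[of t i "n+1" b] t bc crit_cells by auto
      next
        case False
        thus ?thesis using nz' nt a unfolding vf_red_def by (auto simp: delta_def split: if_splits)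
      qed
    qed
    thus "b \<in> filt DC i (n + 0)" using bc by simp
  qed
  show "is_filtered_map DC C 0 gc'" unfolding is_filtered_map_def
  proof (intro allI impI)
    fix i n e a assume e: "e \<in> filt DC i n" and a: "a \<in> cells C (n + 0)" and nz: "gc' n e a \<noteq> 0"
    have ec: "e \<in> crit C V n" "e \<in> filt C i n" using e by auto
    have nz': "gv n e a \<noteq> 0" using nz gc'_eq[OF ec(1)] by simp
    show "a \<in> filt C i (n + 0)"
    proof (cases "a \<in> tgt C V n")
      case True
      hence "(\<Sum>s\<in>src C V (n - 1). bd C n e s * inv21 C V n s a) \<noteq> 0"
        using nz' unfolding vf_red_def by simp
      then obtain s where s: "s \<in> src C V (n - 1)" "bd C n e s * inv21 C V n s a \<noteq> 0"
        by (meson sum.neutral)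
      have "s \<in> filt C i (n - 1)" using filt_bd[OF ec(2)] s unfolding src_def by auto
      thus ?thesis using inv21_filt[OF fid] s by auto
    next
      case False
      thus ?thesis using nz' ec unfolding vf_red_def by (auto simp: delta_def split: if_splits)
    qed
  qed
  show "is_filtered_map C C 1 hc'" unfolding is_filtered_map_def hc'_eq
  proof (intro allI impI)
    fix i n a b assume a: "a \<in> filt C i n" and b: "b \<in> cells C (n + 1)" and nz: "hv n a b \<noteq> 0"
    have "inv21 C V (n + 1) a b \<noteq> 0" using nz unfolding vf_red_def by (simp split: if_splits)
    moreover have "a \<in> filt C i (n + 1 - 1)" using a by simp
    ultimately show "b \<in> filt C i (n + 1)" using inv21_filt[OF fid] by blast
  qed
qed

end

lemma adm_empty: "is_admissible C {}"
  unfolding is_admissible_def is_vpath_def by auto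

theorem theorem6:
  fixes C :: "'a fcx"
  assumes "is_filtered_digital_image C"
  shows "\<exists>Vs. Vs \<noteq> [] \<and> valid_seq C Vs \<and>
    (case iter_red C Vs of (EC, (f, g, h)) \<Rightarrow>
       is_filtered_complex EC \<and> is_reduction C EC f g h \<and>
       is_filtered_map C EC 0 f \<and> is_filtered_map EC C 0 g \<and> is_filtered_map C C 1 h)"
proof -
  have fc: "is_filtered_complex C" and bnd: "\<exists>N::int. \<forall>n. (n < 0 \<or> n > N) \<longrightarrow> cells C n = {}"
    using assms unfolding is_filtered_digital_image_def by auto
  define Y where "Y = (\<Union>n. cells C n)"
  have finY: "finite Y"
  proof -
    obtain N :: int where N: "\<forall>n. (n < 0 \<or> n > N) \<longrightarrow> cells C n = {}" using bnd by blast
    have "Y = (\<Union>n\<in>{0..N}. cells C n)" unfolding Y_def using N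
    proof (auto simp: not_less)
      fix x n assume "x \<in> cells C n"
      hence "0 \<le> n \<and> n \<le> N" using N by (metis empty_iff not_le)
      thus "\<exists>m\<in>{0..N}. x \<in> cells C m" using \<open>x \<in> cells C n\<close> by auto
    qed
    thus ?thesis using fc unfolding is_filtered_complex_def by simp
  qed
  define F where "F = {V. V \<subseteq> Y \<times> Y \<and> is_filt_dvf C V \<and> is_admissible C V}"
  have finF: "finite F" unfolding F_def
    by (rule finite_subset[of _ "Pow (Y \<times> Y)"]) (use finY in auto)
  have "{} \<in> F" unfolding F_def is_filt_dvf_def is_dvf_def using adm_empty by auto
  hence "F \<noteq> {}" by auto
  then obtain V where V: "V \<in> F" and Vmax: "\<And>W. W \<in> F \<Longrightarrow> V \<subseteq> W \<Longrightarrow> V = W"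
    using finite_has_maximal[OF finF] by blast
  have fd: "is_filt_dvf C V" and ad: "is_admissible C V" using V unfolding F_def by auto
  have mx: "is_maximal_filt_dvf C V" unfolding is_maximal_filt_dvf_def
  proof (intro conjI fd ad notI)
    assume "\<exists>s t. (s, t) \<notin> V \<and> is_filt_dvf C (insert (s, t) V) \<and> is_admissible C (insert (s, t) V)"
    then obtain s t where st: "(s, t) \<notin> V" "is_filt_dvf C (insert (s, t) V)" "is_admissible C (insert (s, t) V)"
      by blast
    have "s \<in> Y" "t \<in> Y" using st(2) unfolding is_filt_dvf_def is_dvf_def Y_def by fastforce+
    hence "insert (s, t) V \<in> F" using st V unfolding F_def by auto
    hence "V = insert (s, t) V" using Vmax by blast
    thus False using st(1) by blast
  qed
  interpret dctx C V
    by unfold_locales (use fc bnd fd ad in \<open>auto simp: is_filt_dvf_def\<close>)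
  have fid: "\<forall>(s, t)\<in>V. fidx C s = fidx C t" using fd unfolding is_filt_dvf_def by auto
  show ?thesis
  proof (intro exI[of _ "[V]"] conjI)
    show "valid_seq C [V]" using ad mx by simp
    show "case iter_red C [V] of (EC, f, g, h) \<Rightarrow>
       is_filtered_complex EC \<and> is_reduction C EC f g h \<and>
       is_filtered_map C EC 0 f \<and> is_filtered_map EC C 0 g \<and> is_filtered_map C C 1 h"
      using final_props[OF fid] comp_red_eq by (simp add: Let_def)
  qed simp
qed

end
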